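(* Consider the algorithm SCHEMATIC-ALGO$(G,\mu^*,m^*,\Delta^*,\gamma)$ described in the context. At the end of its last round, with high probability $|U|<\mu^*\cdot(\Delta^* )^\gamma$, where $U$ is the set of edges of $E\setminus H$ underfull w.r.t. the final set $H$.
   Context: Let $G=(V,E)$ be a graph with $n$ vertices, $m$ edges, average degree $d$; $\mu(G)$ is its maximum matching size. Fix a small constant $\epsilon\in(0,1)$ and $\beta:=1/\Theta(\epsilon^3)$. For $H\subseteq E$ and a pair $e=(u,v)$, $\deg_e(H):=\deg_u(H)+\deg_v(H)$. An edge $e$ is underfull w.r.t. $H$ if $\deg_e(H)<(1-\epsilon)\beta$ and overfull w.r.t. $H$ if $\deg_e(H)>\beta$. The parameters satisfy $\mu(G)/(2+\epsilon)\le\mu^*\le n$, $d\le\Delta^*\le n$, $m^*\ge m$, $0<\gamma<1$. SCHEMATIC-ALGO: set $H\leftarrow\emptyset$. Repeat rounds: in each round set Status $\leftarrow$ false; for $i=1,\dots,(100m^*\log n)/(\mu^*(\Delta^* )^\gamma)$, sample an edge $e\in E$ uniformly at random (independently, with repetition); if $e\in E\setminus H$ and $e$ is underfull w.r.t. $H$, then set Status $\leftarrow$ true, $H\leftarrow H\cup\{e\}$, and then while some edge of $H$ is overfull w.r.t. $H$, remove such an edge from $H$. If at the end of a round Status is false, stop the rounds (this is the last round). Then let $U$ be the set of edges of $E\setminus H$ underfull w.r.t. $H$, take any $V_{small}\subseteq V$ with $\{v:\deg_v(U)\le (1-\epsilon)(\Delta^* )^\gamma/\epsilon\}\subseteq V_{small}\subseteq\{v:\deg_v(U)\le(1+\epsilon)(\Delta^*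 )^\gamma/\epsilon\}$, let $E_{small}:=\{(u,v)\in H\cup U: u,v\in V_{small}\}$, and return $\mu(E_{small})$. "With high probability" means with probability at least $1-1/\mathrm{poly}(n)$. *)

theory Defs
  imports "HOL-Probability.Probability" "HOL-Library.While_Combinator"
begin

definition simple_graph :: "'a set \<Rightarrow> 'a set set \<Rightarrow> bool" where
  "simple_graph V E \<longleftrightarrow> finite V \<and> (\<forall>e\<in>E. \<exists>u v. e = {u, v} \<and> u \<noteq> v \<and> u \<in> V \<and> v \<in> V)"

definition is_matching :: "'a set set \<Rightarrow> bool" where
  "is_matching M \<longleftrightarrow> (\<forall>e\<in>M. \<forall>f\<in>M. e \<noteq> f \<longrightarrow> e \<inter> f = {})"

definition max_matching_size :: "'a set set \<Rightarrow> nat" where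
  "max_matching_size E = Max {card M | M. M \<subseteq> E \<and> is_matching M}"

definition deg :: "'a set set \<Rightarrow> 'a \<Rightarrow> nat" where
  "deg H v = card {e \<in> H. v \<in> e}"

definition deg_edge :: "'a set set \<Rightarrow> 'a set \<Rightarrow> nat" where
  "deg_edge H e = (\<Sum>v\<in>e. deg H v)"

definition underfull :: "real \<Rightarrow> real \<Rightarrow> 'a set set \<Rightarrow> 'a set \<Rightarrow> bool" where
  "underfull eps beta H e \<longleftrightarrow> real (deg_edge H e) < (1 - eps) * beta"

definition overfull :: "real \<Rightarrow> 'a set set \<Rightarrow> 'a set \<Rightarrow> bool" where
  "overfull beta H e \<longleftrightarrow> real (deg_edge H e) > beta"

text \<open>"while some edge of H is overfull, remove such an edge"; the arbitrary choice
  of the edge to remove is resolved by the policy pick.\<close>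
definition cleanup :: "real \<Rightarrow> ('a set set \<Rightarrow> 'a set) \<Rightarrow> 'a set set \<Rightarrow> 'a set set" where
  "cleanup beta pick H0 = while (\<lambda>H. \<exists>f\<in>H. overfull beta H f) (\<lambda>H. H - {pick H}) H0"

definition sample_step :: "real \<Rightarrow> real \<Rightarrow> 'a set set \<Rightarrow> ('a set set \<Rightarrow> 'a set)
    \<Rightarrow> 'a set set \<Rightarrow> 'a set \<Rightarrow> 'a set set" where
  "sample_step eps beta E pick H e =
     (if e \<in> E - H \<and> underfull eps beta H e then cleanup beta pick (insert e H) else H)"

primrec H_after :: "real \<Rightarrow> real \<Rightarrow> 'a set set \<Rightarrow> ('a set set \<Rightarrow> 'a set)
    \<Rightarrow> 'a set stream \<Rightarrow> nat \<Rightarrow> 'a set set" where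
  "H_after eps beta E pick \<omega> 0 = {}"
| "H_after eps beta E pick \<omega> (Suc t) =
     sample_step eps beta E pick (H_after eps beta E pick \<omega> t) (\<omega> !! t)"

text \<open>Round r (0-based) consists of samples r*k, ..., r*k+k-1; its Status becomes true
  iff some sample of the round is an edge of E - H underfull w.r.t. the current H.\<close>
definition round_status :: "real \<Rightarrow> real \<Rightarrow> 'a set set \<Rightarrow> ('a set set \<Rightarrow> 'a set)
    \<Rightarrow> nat \<Rightarrow> 'a set stream \<Rightarrow> nat \<Rightarrow> bool" where
  "round_status eps beta E pick k \<omega> r \<longleftrightarrow>
     (\<exists>i<k. \<omega> !! (r * k + i) \<in> E - H_after eps beta E pick \<omega> (r * k + i)
            \<and> underfull eps beta (H_after eps beta E pick \<omega> (r * k + i)) (\<omega> !! (r * k + i)))"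

definition is_last_round :: "real \<Rightarrow> real \<Rightarrow> 'a set set \<Rightarrow> ('a set set \<Rightarrow> 'a set)
    \<Rightarrow> nat \<Rightarrow> 'a set stream \<Rightarrow> nat \<Rightarrow> bool" where
  "is_last_round eps beta E pick k \<omega> r \<longleftrightarrow>
     (\<forall>r'<r. round_status eps beta E pick k \<omega> r') \<and> \<not> round_status eps beta E pick k \<omega> r"

definition underfull_set :: "real \<Rightarrow> real \<Rightarrow> 'a set set \<Rightarrow> 'a set set \<Rightarrow> 'a set set" where
  "underfull_set eps beta E H = {e \<in> E - H. underfull eps beta H e}"

definition samples_per_round :: "nat \<Rightarrow> real \<Rightarrow> real \<Rightarrow> real \<Rightarrow> real \<Rightarrow> nat" where
  "samples_per_round n mu_s m_s Delta_s gamma =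
     nat \<lceil>100 * m_s * ln (real n) / (mu_s * Delta_s powr gamma)\<rceil>"

end

theory Submission
  imports Defs
begin



primrec Hg :: "real \<Rightarrow> real \<Rightarrow> 'a set set \<Rightarrow> ('a set set \<Rightarrow> 'a set)
    \<Rightarrow> 'a set set \<Rightarrow> 'a set stream \<Rightarrow> nat \<Rightarrow> 'a set set" where
  "Hg eps beta E pick H0 \<omega> 0 = H0"
| "Hg eps beta E pick H0 \<omega> (Suc t) =
     sample_step eps beta E pick (Hg eps beta E pick H0 \<omega> t) (\<omega> !! t)"

lemma H_after_Hg: "H_after eps beta E pick \<omega> t = Hg eps beta E pick {} \<omega> t"
  by (induction t) auto

lemma Hg_shift: "Hg eps beta E pick H0 (x ## \<omega>) (Suc t) = Hg eps beta E pick (sample_step eps beta E pick H0 x) \<omega> t"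
  by (induction t) auto

locale edcs =
  fixes V :: "'a set" and E :: "'a set set" and eps beta :: real and pick :: "'a set set \<Rightarrow> 'a set"
  assumes sg: "simple_graph V E"
  and eb: "4 \<le> eps * beta" and b8: "8 \<le> beta"
  and pick_ok: "\<forall>H\<subseteq>E. (\<exists>f\<in>H. overfull beta H f) \<longrightarrow> pick H \<in> H \<and> overfull beta H (pick H)"
begin

definition A :: nat where "A = nat \<lfloor>beta\<rfloor>"

definition phi :: "'a set set \<Rightarrow> int" where
  "phi H = (2 * int A - 3) * int (card H) - (\<Sum>v\<in>V. int (deg H v)^2)"

lemma finV: "finite V" using sg by (simp add: simple_graph_def)

lemma E_sub: "E \<subseteq> Pow V"
proof
  fix e assume "e \<in> E"
  then obtain u v where "e = {u, v}" "u \<in> V" "v \<in> V" using sg unfolding simple_graph_def by meson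
  then show "e \<in> Pow V" by auto
qed

lemma finE: "finite E" by (rule finite_subset[OF E_sub]) (simp add: finV)

lemma edge: "e \<in> E \<Longrightarrow> \<exists>u w. e = {u, w} \<and> u \<noteq> w \<and> u \<in> V \<and> w \<in> V"
  using sg unfolding simple_graph_def by blast

lemma A_ge: "A \<ge> 8" "real A \<le> beta" "beta < real A + 1"
proof -
  have f8: "(8::int) \<le> \<lfloor>beta\<rfloor>" using b8 by (simp add: le_floor_iff)
  have rA: "real A = real_of_int \<lfloor>beta\<rfloor>" unfolding A_def using f8 by simp
  show "A \<ge> 8" unfolding A_def using nat_mono[OF f8] by simp
  show "real A \<le> beta" unfolding rA by (rule of_int_floor_le)
  show "beta < real A + 1" unfolding rA by (rule real_of_int_floor_add_one_gt)
qed

lemma deg_remove: "e \<in> H \<Longrightarrow> finite H \<Longrightarrow> deg (H - {e}) v = deg H v - (if v \<in> e then 1 else 0)"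
proof (cases "v \<in> e")
  case True
  assume a: "e \<in> H" "finite H"
  have eq: "{f \<in> H - {e}. v \<in> f} = {f \<in> H. v \<in> f} - {e}" by blast
  have m: "e \<in> {f \<in> H. v \<in> f}" using a True by blast
  have "deg (H - {e}) v = card ({f \<in> H. v \<in> f} - {e})" unfolding deg_def eq ..
  also have "\<dots> = card {f \<in> H. v \<in> f} - 1" by (rule card_Diff_singleton[OF m])
  finally show ?thesis using True unfolding deg_def by (simp only: if_True)
next
  case False
  have eq: "{f \<in> H - {e}. v \<in> f} = {f \<in> H. v \<in> f}" using False by blast
  show ?thesis unfolding deg_def eq using False by (simp only: if_False diff_zero)
qed

lemma deg_insert: "e \<notin> H \<Longrightarrow> finite H \<Longrightarrow> deg (insert e H) v = deg H v + (if v \<in> e then 1 else 0)"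
proof (cases "v \<in> e")
  case True
  assume a: "e \<notin> H" "finite H"
  have eq: "{f \<in> insert e H. v \<in> f} = insert e {f \<in> H. v \<in> f}" using True by blast
  have m: "e \<notin> {f \<in> H. v \<in> f}" using a by blast
  have fin: "finite {f \<in> H. v \<in> f}" using a by simp
  have "deg (insert e H) v = card (insert e {f \<in> H. v \<in> f})" unfolding deg_def eq ..
  also have "\<dots> = Suc (card {f \<in> H. v \<in> f})" by (rule card_insert_disjoint[OF fin m])
  finally show ?thesis using True unfolding deg_def by (simp only: if_True Suc_eq_plus1)
next
  case False
  have eq: "{f \<in> insert e H. v \<in> f} = {f \<in> H. v \<in> f}" using False by blast
  show ?thesis unfolding deg_def eq using False by (simp only: if_False add_0_right)
qed

lemma deg_pos: "e \<in> H \<Longrightarrow> finite H \<Longrightarrow> v \<in> e \<Longrightarrow> deg H v \<ge> 1"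
proof -
  assume a: "e \<in> H" "finite H" "v \<in> e"
  have "e \<in> {f \<in> H. v \<in> f}" "finite {f \<in> H. v \<in> f}" using a by auto
  then have "card {f \<in> H. v \<in> f} > 0" using card_gt_0_iff by blast
  then show ?thesis unfolding deg_def by simp
qed

lemma sum_split2: "u \<noteq> w \<Longrightarrow> u \<in> V \<Longrightarrow> w \<in> V \<Longrightarrow> (\<Sum>v\<in>V. f v) = f u + f w + (\<Sum>v\<in>V - {u, w}. f v)"
proof -
  assume a: "u \<noteq> w" "u \<in> V" "w \<in> V"
  have "(\<Sum>v\<in>V. f v) = (\<Sum>v\<in>V - {u, w}. f v) + (\<Sum>v\<in>{u,w}. f v)"
    by (rule sum.subset_diff) (use a finV in auto)
  then show ?thesis using a by (simp add: algebra_simps)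
qed

lemma phi_remove:
  assumes "H \<subseteq> E" "e \<in> H" "overfull beta H e"
  shows "phi (H - {e}) \<ge> phi H + 3"
proof -
  have fH: "finite H" using assms finE finite_subset by blast
  obtain u w where e: "e = {u, w}" "u \<noteq> w" "u \<in> V" "w \<in> V" using edge assms by blast
  have de: "deg_edge H e = deg H u + deg H w" unfolding deg_edge_def using e by simp
  have "real (deg_edge H e) > real A" using assms(3) A_ge unfolding overfull_def by linarith
  hence big: "deg H u + deg H w \<ge> A + 1" using de by linarith
  have du: "deg H u \<ge> 1" "deg H w \<ge> 1" using deg_pos[OF assms(2) fH] e by auto
  have c0: "card H > 0" using assms(2) fH card_gt_0_iff by blast
  have c: "card (H - {e}) = card H - 1" "card H \<ge> 1" using assms(2) fH c0
    by (simp_all add: card_Diff_singleton_if)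
  have s1: "(\<Sum>v\<in>V. int (deg (H - {e}) v)^2) = int (deg H u - 1)^2 + int (deg H w - 1)^2 + (\<Sum>v\<in>V - {u, w}. int (deg H v)^2)"
  proof -
    have "\<And>v. v \<in> V - {u, w} \<Longrightarrow> deg (H - {e}) v = deg H v" using deg_remove[OF assms(2) fH] e by auto
    then have "(\<Sum>v\<in>V - {u, w}. int (deg (H - {e}) v)^2) = (\<Sum>v\<in>V - {u, w}. int (deg H v)^2)"
      by (intro sum.cong) auto
    moreover have "deg (H - {e}) u = deg H u - 1" "deg (H - {e}) w = deg H w - 1"
      using deg_remove[OF assms(2) fH] e by auto
    ultimately show ?thesis using sum_split2[OF e(2-4), of "\<lambda>v. int (deg (H - {e}) v)^2"] by simp
  qed
  have s2: "(\<Sum>v\<in>V. int (deg H v)^2) = int (deg H u)^2 + int (deg H w)^2 + (\<Sum>v\<in>V - {u, w}. int (deg H v)^2)"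
    using sum_split2[OF e(2-4), of "\<lambda>v. int (deg H v)^2"] by simp
  have i1: "int (deg H u - 1) = int (deg H u) - 1" "int (deg H w - 1) = int (deg H w) - 1"
    "int (card (H - {e})) = int (card H) - 1" using du c by auto
  have eq: "phi (H - {e}) - phi H = 2 * int (deg H u) + 2 * int (deg H w) - 2 - (2 * int A - 3)"
    unfolding phi_def s1 s2 i1 by (simp add: power2_eq_square algebra_simps)
  have bigi: "int (deg H u) + int (deg H w) \<ge> int A + 1" using of_nat_mono[OF big, where 'a=int] by simp
  show ?thesis using eq bigi by simp
qed

lemma phi_insert:
  assumes "H \<subseteq> E" "e \<in> E" "e \<notin> H" "underfull eps beta H e"
  shows "phi (insert e H) \<ge> phi H + 3"
proof -
  have fH: "finite H" using assms finE finite_subset by blast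
  obtain u w where e: "e = {u, w}" "u \<noteq> w" "u \<in> V" "w \<in> V" using edge assms by blast
  have de: "deg_edge H e = deg H u + deg H w" unfolding deg_edge_def using e by simp
  have "real (deg_edge H e) < real A - 3" using assms(4) A_ge eb unfolding underfull_def
    by (simp add: algebra_simps) 
  hence small: "deg H u + deg H w + 4 \<le> A" using de by linarith
  have c: "card (insert e H) = card H + 1" using assms fH by simp
  have s1: "(\<Sum>v\<in>V. int (deg (insert e H) v)^2) = int (deg H u + 1)^2 + int (deg H w + 1)^2 + (\<Sum>v\<in>V - {u, w}. int (deg H v)^2)"
  proof -
    have "\<And>v. v \<in> V - {u, w} \<Longrightarrow> deg (insert e H) v = deg H v" using deg_insert[OF assms(3) fH] e by auto
    then have "(\<Sum>v\<in>V - {u, w}. int (deg (insert e H) v)^2) = (\<Sum>v\<in>V - {u, w}. int (deg H v)^2)"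
      by (intro sum.cong) auto
    moreover have "deg (insert e H) u = deg H u + 1" "deg (insert e H) w = deg H w + 1"
      using deg_insert[OF assms(3) fH] e by auto
    ultimately show ?thesis using sum_split2[OF e(2-4), of "\<lambda>v. int (deg (insert e H) v)^2"] by simp
  qed
  have s2: "(\<Sum>v\<in>V. int (deg H v)^2) = int (deg H u)^2 + int (deg H w)^2 + (\<Sum>v\<in>V - {u, w}. int (deg H v)^2)"
    using sum_split2[OF e(2-4), of "\<lambda>v. int (deg H v)^2"] by simp
  have eq: "phi (insert e H) - phi H = (2 * int A - 3) - 2 * int (deg H u) - 2 * int (deg H w) - 2"
    unfolding phi_def s1 s2 c by (simp add: power2_eq_square algebra_simps)
  have smalli: "int (deg H u) + int (deg H w) + 4 \<le> int A" using of_nat_mono[OF small, where 'a=int] by simp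
  show ?thesis using eq smalli by simp
qed

lemma phi_le: "H \<subseteq> E \<Longrightarrow> phi H \<le> (2 * int A - 3) * int (card E)"
proof -
  assume "H \<subseteq> E"
  hence "card H \<le> card E" using finE card_mono by blast
  moreover have "(\<Sum>v\<in>V. int (deg H v)^2) \<ge> 0" by (simp add: sum_nonneg)
  moreover have "(2 * int A - 3) * int (card H) \<le> (2 * int A - 3) * int (card E)"
    using A_ge \<open>card H \<le> card E\<close> by (intro mult_left_mono) auto
  ultimately show ?thesis unfolding phi_def by linarith
qed

lemma cleanup_props:
  assumes "H \<subseteq> E"
  shows "cleanup beta pick H \<subseteq> H \<and> phi (cleanup beta pick H) \<ge> phi H"
proof -
  have "(\<lambda>H'. H' \<subseteq> H \<and> phi H' \<ge> phi H) (while (\<lambda>H. \<exists>f\<in>H. overfull beta H f) (\<lambda>H. H - {pick H}) H)"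
  proof (rule while_rule[where P = "\<lambda>H'. H' \<subseteq> H \<and> phi H' \<ge> phi H" and r = "Wellfounded.measure card"])
    fix s assume P: "s \<subseteq> H \<and> phi s \<ge> phi H" and b: "\<exists>f\<in>s. overfull beta s f"
    have sE: "s \<subseteq> E" using P assms by blast
    have "pick s \<in> s \<and> overfull beta s (pick s)" using pick_ok sE b by blast
    then have "phi (s - {pick s}) \<ge> phi s + 3" using phi_remove sE by blast
    then show "s - {pick s} \<subseteq> H \<and> phi (s - {pick s}) \<ge> phi H" using P by auto
    have fs: "finite s" using sE finE finite_subset by blast
    show "(s - {pick s}, s) \<in> Wellfounded.measure card"
      using \<open>pick s \<in> s \<and> overfull beta s (pick s)\<close> fs card_Diff1_less[of s "pick s"] by auto
  qed (auto)
  then show ?thesis unfolding cleanup_def by blast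
qed

abbreviation step where "step \<equiv> sample_step eps beta E pick"

lemma step_props:
  assumes "H \<subseteq> E"
  shows "step H x \<subseteq> E" "phi (step H x) \<ge> phi H"
    "x \<in> E - H \<and> underfull eps beta H x \<Longrightarrow> phi (step H x) \<ge> phi H + 3"
proof -
  show "step H x \<subseteq> E" using assms cleanup_props[of "insert x H"] unfolding sample_step_def by auto
  show "x \<in> E - H \<and> underfull eps beta H x \<Longrightarrow> phi (step H x) \<ge> phi H + 3"
    using assms cleanup_props[of "insert x H"] phi_insert[of H x] unfolding sample_step_def by auto
  then show "phi (step H x) \<ge> phi H" unfolding sample_step_def by auto
qed

end



context edcs begin

abbreviation HA where "HA \<equiv> H_after eps beta E pick"

lemma Hg_sub: "H0 \<subseteq> E \<Longrightarrow> Hg eps beta E pick H0 \<omega> t \<subseteq> E"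
  by (induction t) (auto intro: step_props(1)[THEN subsetD])

lemma HA_sub: "HA \<omega> t \<subseteq> E"
  unfolding H_after_Hg by (rule Hg_sub) simp

lemma HA_Suc: "HA \<omega> (Suc t) = step (HA \<omega> t) (\<omega> !! t)" by simp

lemma phi_mono: "t \<le> t' \<Longrightarrow> phi (HA \<omega> t) \<le> phi (HA \<omega> t')"
proof (induction t' rule: dec_induct)
  case base then show ?case by simp
next
  case (step n)
  have "phi (HA \<omega> n) \<le> phi (HA \<omega> (Suc n))" unfolding HA_Suc using step_props(2)[OF HA_sub] .
  then show ?case using step.IH by linarith
qed

lemma phi_succ: "\<omega> !! t \<in> E - HA \<omega> t \<and> underfull eps beta (HA \<omega> t) (\<omega> !! t)
   \<Longrightarrow> phi (HA \<omega> (Suc t)) \<ge> phi (HA \<omega> t) + 3"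
  unfolding HA_Suc by (rule step_props(3)[OF HA_sub])

lemma phi_HA0: "phi (HA \<omega> 0) = 0" unfolding phi_def deg_def by simp

lemma phi_rounds: "(\<forall>r'<r. round_status eps beta E pick k \<omega> r') \<Longrightarrow> phi (HA \<omega> (r * k)) \<ge> 3 * int r"
proof (induction r)
  case 0 then show ?case using phi_HA0 by simp
next
  case (Suc r)
  have IH: "phi (HA \<omega> (r * k)) \<ge> 3 * int r" using Suc by auto
  have "round_status eps beta E pick k \<omega> r" using Suc.prems by auto
  then obtain i where i: "i < k" and s: "\<omega> !! (r * k + i) \<in> E - HA \<omega> (r * k + i)
            \<and> underfull eps beta (HA \<omega> (r * k + i)) (\<omega> !! (r * k + i))"
    unfolding round_status_def by blast
  have "phi (HA \<omega> (r * k)) \<le> phi (HA \<omega> (r * k + i))" by (rule phi_mono) simp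
  also have "\<dots> + 3 \<le> phi (HA \<omega> (Suc (r * k + i)))" by (rule phi_succ[OF s])
  also have "\<dots> \<le> phi (HA \<omega> (Suc r * k))" by (rule phi_mono) (use i in simp)
  finally show ?case using IH by simp
qed

definition R :: nat where "R = A * card E"

lemma exists_nonstatus: "\<exists>r \<le> R. \<not> round_status eps beta E pick k \<omega> r"
proof (rule ccontr)
  assume "\<not> ?thesis"
  then have "\<forall>r'<Suc R. round_status eps beta E pick k \<omega> r'" by auto
  then have "phi (HA \<omega> (Suc R * k)) \<ge> 3 * int (Suc R)" by (rule phi_rounds)
  moreover have "phi (HA \<omega> (Suc R * k)) \<le> (2 * int A - 3) * int (card E)" by (rule phi_le[OF HA_sub])
  moreover have "(2 * int A - 3) * int (card E) < 3 * int (Suc R)"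
  proof -
    have "2 * int A - 3 \<le> 3 * int A" by simp
    from mult_right_mono[OF this, of "int (card E)"]
    have "(2 * int A - 3) * int (card E) \<le> 3 * (int A * int (card E))" by (simp add: algebra_simps)
    then show ?thesis unfolding R_def by simp
  qed
  ultimately show False by linarith
qed

lemma nochange: "\<not> round_status eps beta E pick k \<omega> r \<Longrightarrow> i \<le> k \<Longrightarrow> HA \<omega> (r * k + i) = HA \<omega> (r * k)"
proof (induction i)
  case 0 then show ?case by simp
next
  case (Suc i)
  then have eq: "HA \<omega> (r * k + i) = HA \<omega> (r * k)" by simp
  have "\<not> (\<omega> !! (r * k + i) \<in> E - HA \<omega> (r * k + i) \<and> underfull eps beta (HA \<omega> (r * k + i)) (\<omega> !! (r * k + i)))"
    using Suc.prems unfolding round_status_def by auto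
  then have "HA \<omega> (Suc (r * k + i)) = HA \<omega> (r * k + i)" unfolding HA_Suc sample_step_def by (rule if_not_P)
  then show ?case using eq by simp
qed

definition Bad :: "nat \<Rightarrow> real \<Rightarrow> nat \<Rightarrow> 'a set stream set" where
  "Bad k T r = {\<omega>. T \<le> real (card (underfull_set eps beta E (HA \<omega> (r * k))))
      \<and> (\<forall>i<k. \<omega> !! (r * k + i) \<notin> underfull_set eps beta E (HA \<omega> (r * k)))}"

lemma in_Bad: "\<not> round_status eps beta E pick k \<omega> r \<Longrightarrow> T \<le> real (card (underfull_set eps beta E (HA \<omega> (r * k))))
   \<Longrightarrow> \<omega> \<in> Bad k T r"
proof -
  assume ns: "\<not> round_status eps beta E pick k \<omega> r" and T: "T \<le> real (card (underfull_set eps beta E (HA \<omega> (r * k))))"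
  have "\<omega> !! (r * k + i) \<notin> underfull_set eps beta E (HA \<omega> (r * k))" if "i < k" for i
  proof -
    have "HA \<omega> (r * k + i) = HA \<omega> (r * k)" using nochange[OF ns] that by simp
    then show ?thesis using ns that unfolding round_status_def underfull_set_def by auto
  qed
  then show ?thesis unfolding Bad_def using T by auto
qed

lemma good_target:
  assumes "\<omega> \<notin> (\<Union>r\<le>R. Bad k T r)"
  shows "\<exists>r. is_last_round eps beta E pick k \<omega> r
      \<and> real (card (underfull_set eps beta E (HA \<omega> ((r + 1) * k)))) < T"
proof -
  let ?P = "\<lambda>r. \<not> round_status eps beta E pick k \<omega> r"
  obtain r1 where r1: "r1 \<le> R" "?P r1" using exists_nonstatus by blast
  define r0 where "r0 = (LEAST r. ?P r)"
  have P0: "?P r0" unfolding r0_def by (rule LeastI[of ?P r1]) (rule r1(2))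
  have le: "r0 \<le> R" using Least_le[of ?P r1] r1 unfolding r0_def by linarith
  have last: "is_last_round eps beta E pick k \<omega> r0"
    unfolding is_last_round_def using P0 not_less_Least[of _ ?P] unfolding r0_def by blast
  have eq: "HA \<omega> ((r0 + 1) * k) = HA \<omega> (r0 * k)" using nochange[OF P0, of k] by (simp add: algebra_simps)
  have "\<omega> \<notin> Bad k T r0" using assms le by blast
  then have "\<not> T \<le> real (card (underfull_set eps beta E (HA \<omega> (r0 * k))))" using in_Bad P0 by blast
  then show ?thesis using last eq by auto
qed

end



context edcs begin

lemma meas_Hg:
  assumes "H0 \<subseteq> E"
  shows "(\<lambda>\<omega>. Hg eps beta E pick H0 \<omega> t) \<in> measurable (stream_space (measure_pmf p)) (count_space (Pow E))"
proof (induction t)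
  case 0 then show ?case using assms by simp
next
  case (Suc t)
  have "(\<lambda>\<omega>. (\<lambda>S \<omega>. step S (\<omega> !! t)) (Hg eps beta E pick H0 \<omega> t) \<omega>) \<in> measurable (stream_space (measure_pmf p)) (count_space (Pow E))"
  proof (rule measurable_compose_countable'[where I = "Pow E" and f = "\<lambda>S \<omega>. step S (\<omega> !! t)" and g = "\<lambda>\<omega>. Hg eps beta E pick H0 \<omega> t"])
    fix S assume "S \<in> Pow E"
    then have "(\<lambda>x. step S x) \<in> measurable (measure_pmf p) (count_space (Pow E))"
      using step_props(1) by auto
    then show "(\<lambda>\<omega>. step S (\<omega> !! t)) \<in> measurable (stream_space (measure_pmf p)) (count_space (Pow E))"
      by (rule measurable_compose[OF measurable_snth])
  next
    show "(\<lambda>\<omega>. Hg eps beta E pick H0 \<omega> t) \<in> measurable (stream_space (measure_pmf p)) (count_space (Pow E))"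
      by (rule Suc.IH)
    show "countable (Pow E)" by (rule countable_finite) (simp add: finE)
  qed
  then show ?case by simp
qed

lemma pred_Hg2:
  assumes "H0 \<subseteq> E"
  shows "Measurable.pred (stream_space (measure_pmf p)) (\<lambda>\<omega>. P (Hg eps beta E pick H0 \<omega> t) (\<omega> !! t'))"
proof -
  have "(\<lambda>\<omega>. (\<lambda>S \<omega>. P S (\<omega> !! t')) (Hg eps beta E pick H0 \<omega> t) \<omega>) \<in> measurable (stream_space (measure_pmf p)) (count_space UNIV)"
  proof (rule measurable_compose_countable'[where I = "Pow E" and f = "\<lambda>S \<omega>. P S (\<omega> !! t')" and g = "\<lambda>\<omega>. Hg eps beta E pick H0 \<omega> t"])
    fix S
    have "(\<lambda>x. P S x) \<in> measurable (measure_pmf p) (count_space UNIV)" by simp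
    then show "(\<lambda>\<omega>. P S (\<omega> !! t')) \<in> measurable (stream_space (measure_pmf p)) (count_space UNIV)"
      by (rule measurable_compose[OF measurable_snth])
  next
    show "(\<lambda>\<omega>. Hg eps beta E pick H0 \<omega> t) \<in> measurable (stream_space (measure_pmf p)) (count_space (Pow E))"
      by (rule meas_Hg[OF assms])
    show "countable (Pow E)" by (rule countable_finite) (simp add: finE)
  qed
  then show ?thesis by simp
qed

lemma pred_HA2: "Measurable.pred (stream_space (measure_pmf p)) (\<lambda>\<omega>. P (HA \<omega> t) (\<omega> !! t'))"
  unfolding H_after_Hg by (rule pred_Hg2) simp

lemma pred_HA1: "Measurable.pred (stream_space (measure_pmf p)) (\<lambda>\<omega>. P (HA \<omega> t))"
  using pred_HA2[where P = "\<lambda>H x. P H" and t' = 0] by simp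

lemma pred_status: "Measurable.pred (stream_space (measure_pmf p)) (\<lambda>\<omega>. round_status eps beta E pick k \<omega> r)"
  unfolding round_status_def
  apply (rule pred_intros_countable)
  apply (rule pred_intros_conj1')
  apply (rule pred_HA2[where P = "\<lambda>H x. x \<in> E - H \<and> underfull eps beta H x"])
  done

lemma pred_target: "Measurable.pred (stream_space (measure_pmf p)) (\<lambda>\<omega>. \<exists>r. is_last_round eps beta E pick k \<omega> r
      \<and> real (card (underfull_set eps beta E (HA \<omega> ((r + 1) * k)))) < T)"
  unfolding is_last_round_def
  apply (rule pred_intros_countable)
  apply (rule pred_intros_logic)
   apply (rule pred_intros_logic)
    apply (rule pred_intros_countable)
    apply (rule pred_intros_imp')
    apply (rule pred_status)
   apply (rule pred_intros_logic)
   apply (rule pred_status)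
  apply (rule pred_HA1[where P = "\<lambda>H. real (card (underfull_set eps beta E H)) < T"])
  done

end



context edcs begin

abbreviation MM where "MM \<equiv> measure_pmf (pmf_of_set E)"
abbreviation SS where "SS \<equiv> stream_space MM"

lemma space_SS: "space SS = UNIV" by (simp add: space_stream_space)

lemma pred_cyl: fixes U :: "'a set set" shows "Measurable.pred (stream_space (measure_pmf p)) (\<lambda>\<omega>. \<forall>i<k. \<omega> !! (t + i) \<notin> U)"
  apply (rule pred_intros_countable)
  apply (rule pred_intros_imp')
  apply (rule pred_HA2[where P = "\<lambda>H x. x \<notin> U" and t = 0])
  done

lemma cyl:
  assumes "E \<noteq> {}" "U \<subseteq> E"
  shows "emeasure SS {\<omega>. \<forall>i<k. \<omega> !! i \<notin> U} \<le> ennreal ((1 - real (card U) / real (card E)) ^ k)"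
proof (induction k)
  interpret P: prob_space MM by (rule prob_space_measure_pmf)
  interpret S: prob_space SS by (rule prob_space.prob_space_stream_space[OF prob_space_measure_pmf])
  case 0
  then show ?case using S.emeasure_space_1 space_SS by simp
next
  interpret P: prob_space MM by (rule prob_space_measure_pmf)
  interpret S: prob_space SS by (rule prob_space.prob_space_stream_space[OF prob_space_measure_pmf])
  case (Suc k)
  let ?X = "\<lambda>k. {\<omega>. \<forall>i<k. \<omega> !! i \<notin> U}"
  let ?q = "1 - real (card U) / real (card E)"
  have fE: "finite E" by (rule finE)
  have cU: "card U \<le> card E" using assms fE card_mono by blast
  have cE: "card E > 0" using assms fE card_gt_0_iff by blast
  have q0: "?q \<ge> 0" using cU cE by (simp add: field_simps)
  have meas: "?X (Suc k) \<in> sets SS"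
    using pred_cyl[where p = "pmf_of_set E" and k = "Suc k" and t = 0 and U = U] unfolding pred_def space_SS by simp
  have "emeasure SS (?X (Suc k)) = (\<integral>\<^sup>+t. emeasure SS {x \<in> space SS. t ## x \<in> ?X (Suc k)} \<partial>MM)"
    by (rule prob_space.emeasure_stream_space[OF prob_space_measure_pmf meas])
  also have "\<dots> = (\<integral>\<^sup>+t. emeasure SS (?X k) * indicator (- U) t \<partial>MM)"
  proof (rule nn_integral_cong)
    fix t
    have "{x \<in> space SS. t ## x \<in> ?X (Suc k)} = (if t \<in> U then {} else ?X k)"
      unfolding space_SS by (auto simp: All_less_Suc2)
    then show "emeasure SS {x \<in> space SS. t ## x \<in> ?X (Suc k)} = emeasure SS (?X k) * indicator (- U) t"
      by (auto split: split_indicator)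
  qed
  also have "\<dots> = emeasure SS (?X k) * emeasure MM (- U)"
    by (rule nn_integral_cmult_indicator) simp
  also have "emeasure MM (- U) = ennreal ?q"
  proof -
    have "emeasure MM (- U) = ennreal (measure MM (- U))" by (rule measure_pmf.emeasure_eq_measure)
    also have "measure MM (- U) = real (card (E \<inter> - U)) / real (card E)"
      using assms fE by (simp add: measure_pmf_of_set)
    also have "card (E \<inter> - U) = card E - card U"
    proof -
      have "E \<inter> - U = E - U" by blast
      then show ?thesis using assms fE by (simp add: card_Diff_subset finite_subset)
    qed
    also have "real (card E - card U) / real (card E) = ?q"
      using cU cE by (simp add: of_nat_diff field_simps)
    finally show ?thesis .
  qed
  also have "emeasure SS (?X k) * ennreal ?q \<le> ennreal (?q ^ k) * ennreal ?q"
    by (rule mult_right_mono[OF Suc.IH]) simp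
  also have "\<dots> = ennreal (?q ^ Suc k)" using q0 by (simp add: ennreal_mult[symmetric] mult.commute)
  finally show ?case .
qed

definition BG :: "nat \<Rightarrow> real \<Rightarrow> 'a set set \<Rightarrow> nat \<Rightarrow> 'a set stream set" where
  "BG k T H0 t = {\<omega>. T \<le> real (card (underfull_set eps beta E (Hg eps beta E pick H0 \<omega> t)))
      \<and> (\<forall>i<k. \<omega> !! (t + i) \<notin> underfull_set eps beta E (Hg eps beta E pick H0 \<omega> t))}"

lemma BG_sets: "H0 \<subseteq> E \<Longrightarrow> BG k T H0 t \<in> sets SS"
proof -
  assume H0: "H0 \<subseteq> E"
  have "Measurable.pred SS (\<lambda>\<omega>. T \<le> real (card (underfull_set eps beta E (Hg eps beta E pick H0 \<omega> t)))
      \<and> (\<forall>i<k. \<omega> !! (t + i) \<notin> underfull_set eps beta E (Hg eps beta E pick H0 \<omega> t)))"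
    apply (rule pred_intros_logic)
     apply (rule pred_Hg2[OF H0, where P = "\<lambda>H x. T \<le> real (card (underfull_set eps beta E H))" and t' = 0])
    apply (rule pred_intros_countable)
    apply (rule pred_intros_imp')
    apply (rule pred_Hg2[OF H0, where P = "\<lambda>H x. x \<notin> underfull_set eps beta E H"])
    done
  then show ?thesis unfolding pred_def space_SS BG_def by simp
qed

lemma BG_bound:
  assumes "E \<noteq> {}" "T \<le> real (card E)"
  shows "H0 \<subseteq> E \<Longrightarrow> emeasure SS (BG k T H0 t) \<le> ennreal ((1 - T / real (card E)) ^ k)"
proof (induction t arbitrary: H0)
  interpret P: prob_space MM by (rule prob_space_measure_pmf)
  interpret S: prob_space SS by (rule prob_space.prob_space_stream_space[OF prob_space_measure_pmf])
  have fE: "finite E" by (rule finE)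
  have cE: "card E > 0" using assms fE card_gt_0_iff by blast
  case 0
  let ?U = "underfull_set eps beta E H0"
  show ?case
  proof (cases "T \<le> real (card ?U)")
    case True
    have UE: "?U \<subseteq> E" unfolding underfull_set_def by auto
    have "BG k T H0 0 = {\<omega>. \<forall>i<k. \<omega> !! i \<notin> ?U}" unfolding BG_def using True by simp
    then have "emeasure SS (BG k T H0 0) \<le> ennreal ((1 - real (card ?U) / real (card E)) ^ k)"
      using cyl[OF assms(1) UE] by simp
    also have "\<dots> \<le> ennreal ((1 - T / real (card E)) ^ k)"
    proof (rule ennreal_leI, rule power_mono)
      have "card ?U \<le> card E" using UE fE card_mono by blast
      then show "0 \<le> 1 - real (card ?U) / real (card E)" using cE by (simp add: field_simps)
      show "1 - real (card ?U) / real (card E) \<le> 1 - T / real (card E)"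
        using True cE by (simp add: divide_right_mono)
    qed
    finally show ?thesis .
  next
    case False
    then have "BG k T H0 0 = {}" unfolding BG_def by auto
    then show ?thesis by simp
  qed
next
  interpret P: prob_space MM by (rule prob_space_measure_pmf)
  interpret S: prob_space SS by (rule prob_space.prob_space_stream_space[OF prob_space_measure_pmf])
  case (Suc t)
  let ?c = "ennreal ((1 - T / real (card E)) ^ k)"
  have "emeasure SS (BG k T H0 (Suc t)) = (\<integral>\<^sup>+x. emeasure SS {\<omega> \<in> space SS. x ## \<omega> \<in> BG k T H0 (Suc t)} \<partial>MM)"
    by (rule prob_space.emeasure_stream_space[OF prob_space_measure_pmf BG_sets[OF Suc.prems]])
  also have "\<dots> = (\<integral>\<^sup>+x. emeasure SS (BG k T (step H0 x) t) \<partial>MM)"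
  proof (rule nn_integral_cong)
    fix x
    have "{\<omega> \<in> space SS. x ## \<omega> \<in> BG k T H0 (Suc t)} = BG k T (step H0 x) t"
      unfolding space_SS BG_def by (simp add: Hg_shift del: Hg.simps)
    then show "emeasure SS {\<omega> \<in> space SS. x ## \<omega> \<in> BG k T H0 (Suc t)} = emeasure SS (BG k T (step H0 x) t)"
      by simp
  qed
  also have "\<dots> \<le> (\<integral>\<^sup>+x. ?c \<partial>MM)"
    by (rule nn_integral_mono) (rule Suc.IH[OF step_props(1)[OF Suc.prems]])
  also have "\<dots> = ?c" using measure_pmf.emeasure_space_1 by simp
  finally show ?case .
qed

lemma Bad_bound:
  assumes "E \<noteq> {}" "T \<le> real (card E)"
  shows "emeasure SS (Bad k T r) \<le> ennreal ((1 - T / real (card E)) ^ k)"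
proof -
  have "Bad k T r = BG k T {} (r * k)" unfolding Bad_def BG_def H_after_Hg ..
  then show ?thesis using BG_bound[OF assms, of "{}"] by simp
qed

lemma Bad_sets: "Bad k T r \<in> sets SS"
proof -
  have "Bad k T r = BG k T {} (r * k)" unfolding Bad_def BG_def H_after_Hg ..
  then show ?thesis using BG_sets[of "{}"] by simp
qed

end



context edcs begin

lemma Bad_measure:
  assumes E0: "E \<noteq> {}" and T0: "0 < T" and kT: "real k * T \<ge> 100 * real (card E) * ln (real n)"
    and n1: "n \<ge> 1"
  shows "measure SS (Bad k T r) \<le> 1 / real n ^ 100"
proof (cases "T \<le> real (card E)")
  case False
  have "Bad k T r = {}"
  proof -
    have "card (underfull_set eps beta E H) \<le> card E" for H
      by (rule card_mono[OF finE]) (auto simp: underfull_set_def)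
    then have c': "real (card (underfull_set eps beta E H)) \<le> real (card E)" for H by simp
    have "\<not> (T \<le> real (card (underfull_set eps beta E (HA \<omega> (r * k)))))" for \<omega>
      using c'[of "HA \<omega> (r * k)"] False by linarith
    then show ?thesis unfolding Bad_def by blast
  qed
  then have "measure SS (Bad k T r) = 0" by (simp only: measure_empty)
  moreover have "0 \<le> 1 / real n ^ 100" by (rule divide_nonneg_nonneg) simp_all
  ultimately show ?thesis by (simp only:)
next
  case True
  have fE: "finite E" by (rule finE)
  have "card E > 0" using E0 fE card_gt_0_iff by blast
  then have cE: "real (card E) > 0" by simp
  let ?q = "1 - T / real (card E)"
  have q0: "0 \<le> ?q" using True cE by (simp add: field_simps)
  have "emeasure SS (Bad k T r) \<le> ennreal (?q ^ k)" by (rule Bad_bound[OF E0 True])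
  then have m1: "measure SS (Bad k T r) \<le> ?q ^ k"
    unfolding measure_def by (rule enn2real_leI[OF zero_le_power[OF q0]])
  have "?q \<le> exp (- (T / real (card E)))" using exp_ge_add_one_self[of "- (T / real (card E))"] by linarith
  then have "?q ^ k \<le> exp (- (T / real (card E))) ^ k" by (rule power_mono[OF _ q0])
  also have "\<dots> = exp (real k * (- (T / real (card E))))" by (rule exp_of_nat_mult[symmetric])
  also have "\<dots> \<le> exp (- (100 * ln (real n)))"
  proof -
    have "real k * (T / real (card E)) \<ge> 100 * ln (real n)"
    proof -
      have "real k * (T / real (card E)) = (real k * T) / real (card E)" by simp
      also have "\<dots> \<ge> (100 * real (card E) * ln (real n)) / real (card E)"
        using kT cE by (intro divide_right_mono) auto
      also have "(100 * real (card E) * ln (real n)) / real (card E) = 100 * ln (real n)" using cE by simp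
      finally show ?thesis .
    qed
    then have "real k * (- (T / real (card E))) \<le> - (100 * ln (real n))" by linarith
    then show ?thesis by (rule exp_mono)
  qed
  also have "\<dots> = 1 / real n ^ 100"
  proof -
    have npos: "0 < real n" using n1 by simp
    have "exp (real (100::nat) * ln (real n)) = exp (ln (real n)) ^ 100" by (rule exp_of_nat_mult)
    then have "exp (100 * ln (real n)) = exp (ln (real n)) ^ 100" by (simp only: of_nat_numeral)
    also have "\<dots> = real n ^ 100" by (simp only: exp_ln[OF npos])
    finally have e: "exp (100 * ln (real n)) = real n ^ 100" .
    show ?thesis by (simp only: exp_minus e inverse_eq_divide)
  qed
  finally show ?thesis by (rule order_trans[OF m1])
qed

lemma main_bound:
  assumes E0: "E \<noteq> {}" and T0: "0 < T" and kT: "real k * T \<ge> 100 * real (card E) * ln (real n)"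
    and nb: "real n \<ge> beta + 2" and En: "card E \<le> n ^ 2"
  shows "measure SS {\<omega>. \<exists>r. is_last_round eps beta E pick k \<omega> r
      \<and> real (card (underfull_set eps beta E (HA \<omega> ((r + 1) * k)))) < T} \<ge> 1 - 1 / real n"
proof -
  interpret P: prob_space MM by (rule prob_space_measure_pmf)
  interpret S: prob_space SS by (rule prob_space.prob_space_stream_space[OF prob_space_measure_pmf])
  let ?G = "{\<omega>. \<exists>r. is_last_round eps beta E pick k \<omega> r
      \<and> real (card (underfull_set eps beta E (HA \<omega> ((r + 1) * k)))) < T}"
  let ?B = "\<Union>r\<le>R. Bad k T r"
  have n1: "n \<ge> 1" using nb b8 by linarith
  have rn: "real n \<ge> 1" using n1 by simp
  have Gs: "?G \<in> sets SS" using pred_target[where p = "pmf_of_set E" and k = k and T = T] unfolding pred_def space_SS by simp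
  have Bs: "?B \<in> sets SS" using Bad_sets by auto
  have sub: "space SS - ?B \<subseteq> ?G" using good_target by blast
  have "measure SS ?B \<le> (\<Sum>r\<le>R. measure SS (Bad k T r))"
    by (rule S.finite_measure_subadditive_finite) (auto simp: Bad_sets)
  also have "\<dots> \<le> (\<Sum>r\<le>R. 1 / real n ^ 100)"
    by (rule sum_mono) (rule Bad_measure[OF E0 T0 kT n1])
  also have "\<dots> = real (Suc R) / real n ^ 100" by simp
  also have "\<dots> \<le> 1 / real n"
  proof -
    have "real R \<le> beta * real n ^ 2"
    proof -
      have "real R = real A * real (card E)" unfolding R_def by simp
      also have "\<dots> \<le> beta * real n ^ 2"
        using A_ge(2) En by (intro mult_mono) (auto simp flip: of_nat_power)
      finally show ?thesis .
    qed
    also have "beta * real n ^ 2 \<le> (real n - 2) * real n ^ 2" using nb by (intro mult_right_mono) auto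
    finally have "real (Suc R) \<le> real n ^ 3 - 2 * real n ^ 2 + 1" by (simp add: algebra_simps power2_eq_square power3_eq_cube)
    moreover have "real n ^ 2 \<ge> 1" using rn by (simp add: one_le_power)
    ultimately have "real (Suc R) \<le> real n ^ 3" by linarith
    then have "real (Suc R) * real n \<le> real n ^ 3 * real n" using rn by (intro mult_right_mono) auto
    also have "real n ^ 3 * real n = real n ^ 4" by (simp add: power_Suc2 numeral_eq_Suc del: power_Suc)
    finally have "real (Suc R) * real n \<le> real n ^ 4" .
    also have "\<dots> \<le> real n ^ 100" by (rule power_increasing[OF _ rn]) simp
    finally have "real (Suc R) * real n \<le> real n ^ 100" .
    then show ?thesis using rn by (simp add: field_simps)
  qed
  finally have mB: "measure SS ?B \<le> 1 / real n" .
  have c1: "measure SS (space SS - ?B) = 1 - measure SS ?B" by (rule S.prob_compl[OF Bs])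
  have c2: "measure SS (space SS - ?B) \<le> measure SS ?G" by (rule S.finite_measure_mono[OF sub Gs])
  show ?thesis using c1 c2 mB by linarith
qed

end



lemma card_E_bound: "simple_graph V E \<Longrightarrow> card E \<le> card V ^ 2"
proof -
  assume sg: "simple_graph V E"
  have fV: "finite V" using sg by (simp add: simple_graph_def)
  have "E \<subseteq> (\<lambda>(u, v). {u, v}) ` (V \<times> V)"
  proof
    fix e assume "e \<in> E"
    then obtain u v where "e = {u, v}" "u \<in> V" "v \<in> V" using sg unfolding simple_graph_def by meson
    then show "e \<in> (\<lambda>(u, v). {u, v}) ` (V \<times> V)" by force
  qed
  then have "card E \<le> card ((\<lambda>(u, v). {u, v}) ` (V \<times> V))" using fV by (intro card_mono) auto
  also have "\<dots> \<le> card (V \<times> V)" using fV by (intro card_image_le) auto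
  also have "\<dots> = card V ^ 2" by (simp add: card_cartesian_product power2_eq_square)
  finally show ?thesis .
qed

lemma mm_pos: "simple_graph V E \<Longrightarrow> E \<noteq> {} \<Longrightarrow> max_matching_size E \<ge> 1"
proof -
  assume sg: "simple_graph V E" and E0: "E \<noteq> {}"
  have "E \<subseteq> Pow V"
  proof
    fix e assume "e \<in> E"
    then obtain u v where "e = {u, v}" "u \<in> V" "v \<in> V" using sg unfolding simple_graph_def by meson
    then show "e \<in> Pow V" by auto
  qed
  then have fE: "finite E" using sg unfolding simple_graph_def by (meson finite_Pow_iff finite_subset)
  obtain e where e: "e \<in> E" using E0 by blast
  let ?S = "{card M | M. M \<subseteq> E \<and> is_matching M}"
  have fin: "finite ?S"
  proof (rule finite_subset)
    show "?S \<subseteq> card ` Pow E" by blast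
    show "finite (card ` Pow E)" using fE by simp
  qed
  have "card {e} \<in> ?S" using e unfolding is_matching_def by blast
  then have "card {e} \<le> Max ?S" using fin by (rule Max_ge[rotated])
  then show ?thesis unfolding max_matching_size_def by simp
qed

theorem corollary3p3:
  fixes eps K :: real
  assumes "0 < eps" and "eps \<le> 1/2" and "1 \<le> K"
  shows "\<exists>c>0. \<exists>N::nat. \<forall>(V::'a set) (E::'a set set) (mu_s::real) (m_s::real) (Delta_s::real)
            (gamma::real) (pick::'a set set \<Rightarrow> 'a set).
    (simple_graph V E \<and> E \<noteq> {} \<and> N \<le> card V
     \<and> real (max_matching_size E) / (2 + eps) \<le> mu_s \<and> mu_s \<le> real (card V)
     \<and> 2 * real (card E) / real (card V) \<le> Delta_s \<and> Delta_s \<le> real (card V)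
     \<and> real (card E) \<le> m_s \<and> 0 < gamma \<and> gamma < 1
     \<and> (\<forall>H\<subseteq>E. (\<exists>f\<in>H. overfull (K / eps ^ 3) H f)
                  \<longrightarrow> pick H \<in> H \<and> overfull (K / eps ^ 3) H (pick H)))
    \<longrightarrow> measure (stream_space (measure_pmf (pmf_of_set E)))
          {\<omega>. \<exists>r. is_last_round eps (K / eps ^ 3) E pick
                     (samples_per_round (card V) mu_s m_s Delta_s gamma) \<omega> r
                 \<and> real (card (underfull_set eps (K / eps ^ 3) E
                        (H_after eps (K / eps ^ 3) E pick \<omega>
                           ((r + 1) * samples_per_round (card V) mu_s m_s Delta_s gamma))))
                   < mu_s * Delta_s powr gamma}
        \<ge> 1 - 1 / real (card V) powr c"
proof -
  have e3: "eps ^ 3 \<le> (1/2) ^ 3" using assms by (intro power_mono) auto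
  have e2: "eps ^ 2 \<le> (1/2) ^ 2" using assms by (intro power_mono) auto
  have ep3: "eps ^ 3 > 0" using assms by simp
  have ep2: "eps ^ 2 > 0" using assms by simp
  have b8: "8 \<le> K / eps ^ 3"
  proof -
    have "eps ^ 3 \<le> 1/8" using e3 by (simp add: power_divide)
    then have "8 * eps ^ 3 \<le> K" using assms(3) by linarith
    then show ?thesis using ep3 by (simp add: le_divide_eq)
  qed
  have eb: "4 \<le> eps * (K / eps ^ 3)"
  proof -
    have eq: "eps * (K / eps ^ 3) = K / eps ^ 2" using assms by (simp add: power3_eq_cube power2_eq_square)
    have "eps ^ 2 \<le> 1/4" using e2 by (simp add: power_divide)
    then have "4 * eps ^ 2 \<le> K" using assms(3) by linarith
    then show ?thesis unfolding eq using ep2 by (simp add: le_divide_eq)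
  qed
  show ?thesis
  proof (rule exI[of _ 1], rule conjI, simp, rule exI[of _ "nat \<lceil>K / eps ^ 3\<rceil> + 2"], intro allI impI)
    fix V :: "'a set" and E :: "'a set set" and mu_s m_s Delta_s gamma :: real and pick :: "'a set set \<Rightarrow> 'a set"
    assume H: "simple_graph V E \<and> E \<noteq> {} \<and> nat \<lceil>K / eps ^ 3\<rceil> + 2 \<le> card V
     \<and> real (max_matching_size E) / (2 + eps) \<le> mu_s \<and> mu_s \<le> real (card V)
     \<and> 2 * real (card E) / real (card V) \<le> Delta_s \<and> Delta_s \<le> real (card V)
     \<and> real (card E) \<le> m_s \<and> 0 < gamma \<and> gamma < 1
     \<and> (\<forall>H\<subseteq>E. (\<exists>f\<in>H. overfull (K / eps ^ 3) H f)
                  \<longrightarrow> pick H \<in> H \<and> overfull (K / eps ^ 3) H (pick H))"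
    then have sg: "simple_graph V E" and E0: "E \<noteq> {}" and nN: "nat \<lceil>K / eps ^ 3\<rceil> + 2 \<le> card V"
      and mu1: "real (max_matching_size E) / (2 + eps) \<le> mu_s"
      and D1: "2 * real (card E) / real (card V) \<le> Delta_s"
      and m1: "real (card E) \<le> m_s"
      and pk: "\<forall>H\<subseteq>E. (\<exists>f\<in>H. overfull (K / eps ^ 3) H f) \<longrightarrow> pick H \<in> H \<and> overfull (K / eps ^ 3) H (pick H)"
      by auto
    interpret edcs V E eps "K / eps ^ 3" pick
      by unfold_locales (use sg eb b8 pk in auto)
    let ?n = "card V"
    let ?k = "samples_per_round (card V) mu_s m_s Delta_s gamma"
    let ?T = "mu_s * Delta_s powr gamma"
    have nb: "real ?n \<ge> K / eps ^ 3 + 2"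
    proof -
      have "K / eps ^ 3 \<le> real (nat \<lceil>K / eps ^ 3\<rceil>)" by (rule real_nat_ceiling_ge)
      then show ?thesis using nN by linarith
    qed
    have n2: "real ?n \<ge> 2" using nb b8 by linarith
    have cE: "card E > 0" using E0 finE card_gt_0_iff by blast
    have mm: "max_matching_size E \<ge> 1" by (rule mm_pos[OF sg E0])
    have mu0: "mu_s > 0"
    proof -
      have "0 < real (max_matching_size E) / (2 + eps)" using mm assms by simp
      then show ?thesis using mu1 by linarith
    qed
    have D0: "Delta_s > 0"
    proof -
      have "0 < 2 * real (card E) / real (card V)" using cE n2 by simp
      then show ?thesis using D1 by linarith
    qed
    have T0: "0 < ?T" using mu0 D0 by simp
    have ln0: "0 \<le> ln (real ?n)" using n2 by simp
    have kT: "real ?k * ?T \<ge> 100 * real (card E) * ln (real ?n)"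
    proof -
      let ?x = "100 * m_s * ln (real ?n) / ?T"
      have "?x \<le> real ?k" unfolding samples_per_round_def by (rule real_nat_ceiling_ge)
      then have f1: "?x * ?T \<le> real ?k * ?T" using T0 by (intro mult_right_mono) auto
      have aux: "\<And>a b::real. b \<noteq> 0 \<Longrightarrow> a / b * b = a" by simp
      have f2: "?x * ?T = 100 * m_s * ln (real ?n)" by (rule aux) (use T0 in linarith)
      have f3: "100 * real (card E) * ln (real ?n) \<le> 100 * m_s * ln (real ?n)"
        using m1 ln0 by (intro mult_right_mono) auto
      show ?thesis using f1 f2 f3 by linarith
    qed
    have "measure SS {\<omega>. \<exists>r. is_last_round eps (K / eps ^ 3) E pick ?k \<omega> r
      \<and> real (card (underfull_set eps (K / eps ^ 3) E (HA \<omega> ((r + 1) * ?k)))) < ?T} \<ge> 1 - 1 / real ?n"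
      by (rule main_bound[OF E0 T0 kT nb card_E_bound[OF sg]])
    then show "measure (stream_space (measure_pmf (pmf_of_set E)))
          {\<omega>. \<exists>r. is_last_round eps (K / eps ^ 3) E pick
                     (samples_per_round (card V) mu_s m_s Delta_s gamma) \<omega> r
                 \<and> real (card (underfull_set eps (K / eps ^ 3) E
                        (H_after eps (K / eps ^ 3) E pick \<omega>
                           ((r + 1) * samples_per_round (card V) mu_s m_s Delta_s gamma))))
                   < mu_s * Delta_s powr gamma}
        \<ge> 1 - 1 / real (card V) powr 1" by simp
  qed
qed



end
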